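(* Every bounded orbit of the planar Stark problem $$\ddot x=-\frac{x}{r^3}+1,\qquad \ddot y=-\frac{y}{r^3},\qquad r=\sqrt{x^2+y^2},$$ is either a collision–ejection orbit on the negative $x$-axis, or it remains within the unit disc $\{|q|\le 1\}$ for all time.
   Context: A collision–ejection orbit on the negative $x$-axis is a solution moving on $\{(x,0):x<0\}$ which reaches the origin (collision) and, after regularization, is ejected back along the same half-line. *)

theory Defs
  imports "HOL-Analysis.Analysis"
begin

definition stark_field :: "real \<times> real \<Rightarrow> real \<times> real" where
  "stark_field q = (let x = fst q; y = snd q; r = sqrt (x\<^sup>2 + y\<^sup>2)
                    in (- x / r ^ 3 + 1, - y / r ^ 3))"

text \<open>A (Levi-Civita regularized) solution of the Stark problem defined for all time:
  q is continuous; away from collisions it is a classical C^2 solution;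
  collision times are isolated and at each collision the motion is ejected back
  along the incoming path (q(t0+s) = q(t0-s) near t0), which is what the
  regularization produces.\<close>
definition stark_solution :: "(real \<Rightarrow> real \<times> real) \<Rightarrow> bool" where
  "stark_solution q \<longleftrightarrow>
     continuous_on UNIV q \<and>
     (\<exists>v. \<forall>t. q t \<noteq> 0 \<longrightarrow>
            (q has_vector_derivative v t) (at t) \<and>
            (v has_vector_derivative stark_field (q t)) (at t)) \<and>
     (\<forall>t0. q t0 = 0 \<longrightarrow>
        (\<exists>\<delta>>0. \<forall>s. 0 < \<bar>s\<bar> \<and> \<bar>s\<bar> < \<delta> \<longrightarrow>
               q (t0 + s) \<noteq> 0 \<and> q (t0 + s) = q (t0 - s)))"

definition collision_ejection_neg_x :: "(real \<Rightarrow> real \<times> real) \<Rightarrow> bool" where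
  "collision_ejection_neg_x q \<longleftrightarrow>
     (\<forall>t. snd (q t) = 0 \<and> fst (q t) \<le> 0) \<and> (\<exists>t. q t = 0)"

end

theory Submission
  imports Defs
begin

definition rad :: "real \<Rightarrow> real \<Rightarrow> real" where "rad a b = sqrt (a\<^sup>2 + b\<^sup>2)"

lemma rad_pos: "a \<noteq> 0 \<or> b \<noteq> 0 \<Longrightarrow> rad a b > 0"
  unfolding rad_def by (auto simp: sum_power2_gt_zero_iff)

lemma rad_sq: "(rad a b)\<^sup>2 = a\<^sup>2 + b\<^sup>2"
  unfolding rad_def by simp

lemma rad_ge: "\<bar>a\<bar> \<le> rad a b" "\<bar>b\<bar> \<le> rad a b"
  unfolding rad_def by (auto intro: real_sqrt_ge_abs1 real_sqrt_ge_abs2)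

lemma deriv_rad:
  assumes "(x has_real_derivative a) (at t)" "(y has_real_derivative b) (at t)" "x t \<noteq> 0 \<or> y t \<noteq> 0"
  shows "((\<lambda>t. rad (x t) (y t)) has_real_derivative (x t * a + y t * b) / rad (x t) (y t)) (at t)"
proof -
  have p: "0 < (x t)\<^sup>2 + (y t)\<^sup>2" using assms(3) by (auto simp: sum_power2_gt_zero_iff)
  show ?thesis unfolding rad_def
    using assms(1,2) p
    apply (auto intro!: derivative_eq_intros)
    apply (subgoal_tac "sqrt ((x t)\<^sup>2 + (y t)\<^sup>2) > 0")
     apply (simp add: field_simps)
    by simp
qed

definition en :: "real \<Rightarrow> real \<Rightarrow> real \<Rightarrow> real \<Rightarrow> real" where
  "en a b c d = (c\<^sup>2 + d\<^sup>2) / 2 - 1 / rad a b - a"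
definition wf :: "real \<Rightarrow> real \<Rightarrow> real" where "wf a b = rad a b + a"
definition gf :: "real \<Rightarrow> real \<Rightarrow> real \<Rightarrow> real \<Rightarrow> real" where
  "gf a b c d = a * c + b * d + rad a b * c"

definition Gf :: "real \<Rightarrow> real \<Rightarrow> real \<Rightarrow> real \<Rightarrow> real" where
  "Gf a b c d = c * c + a * (- a / rad a b ^ 3 + 1) + d * d + b * (- b / rad a b ^ 3)
     + ((a * c + b * d) / rad a b) * c + rad a b * (- a / rad a b ^ 3 + 1)"

lemma Gf_pos:
  assumes N: "a \<noteq> 0 \<or> b \<noteq> 0" and w: "wf a b > 0" and e: "en a b c d + wf a b > 0"
  shows "Gf a b c d > 0"
proof -
  define R where "R = rad a b"
  have R: "R > 0" "R\<^sup>2 = a\<^sup>2 + b\<^sup>2" using rad_pos[OF N] rad_sq R_def by auto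
  define Q where "Q = (R + a) * c\<^sup>2 + 2 * b * c * d + (R - a) * d\<^sup>2"
  have Ra: "R + a > 0" using w unfolding wf_def R_def by simp
  have "(R + a) * Q = ((R + a) * c + b * d)\<^sup>2"
  proof -
    have "(R + a) * Q - ((R + a) * c + b * d)\<^sup>2 = (R\<^sup>2 - a\<^sup>2 - b\<^sup>2) * d\<^sup>2"
      unfolding Q_def by (simp add: algebra_simps power2_eq_square)
    then show ?thesis using R(2) by simp
  qed
  then have "(R + a) * Q \<ge> 0" by simp
  then have Q: "Q \<ge> 0" using Ra by (simp add: zero_le_mult_iff)
  have s1: "a * (- a / R ^ 3 + 1) + b * (- b / R ^ 3) = a - 1 / R"
  proof -
    have "a * (- a / R ^ 3 + 1) + b * (- b / R ^ 3) = a - (a\<^sup>2 + b\<^sup>2) / R ^ 3"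
      by (simp add: power2_eq_square add_divide_distrib algebra_simps)
    also have "\<dots> = a - R\<^sup>2 / R ^ 3" using R(2) by simp
    also have "\<dots> = a - 1 / R" using R(1) by (simp add: power2_eq_square power3_eq_cube)
    finally show ?thesis .
  qed
  have s2: "R * (- a / R ^ 3 + 1) = R - a / R\<^sup>2" using R(1)
    by (simp add: field_simps power2_eq_square power3_eq_cube)
  have g1: "Gf a b c d = c * c + d * d + (a - 1 / R) + ((a * c + b * d) / R) * c + (R - a / R\<^sup>2)"
    unfolding Gf_def R_def[symmetric] using s1 s2 by simp
  have eq: "Gf a b c d = (wf a b * (en a b c d + wf a b) + Q / 2) / R"
    unfolding g1 en_def wf_def Q_def R_def[symmetric] using R(1)
    by (simp add: field_simps power2_eq_square)
  have "wf a b * (en a b c d + wf a b) > 0" using w e by simp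
  then show ?thesis unfolding eq using R(1) Q by simp
qed

locale stark =
  fixes x y vx vy :: "real \<Rightarrow> real"
  assumes contx: "continuous_on UNIV x" and conty: "continuous_on UNIV y"
  and ode: "\<And>t. x t \<noteq> 0 \<or> y t \<noteq> 0 \<Longrightarrow> (x has_real_derivative vx t) (at t) \<and> (y has_real_derivative vy t) (at t)
     \<and> (vx has_real_derivative (- x t / rad (x t) (y t) ^ 3 + 1)) (at t)
     \<and> (vy has_real_derivative (- y t / rad (x t) (y t) ^ 3)) (at t)"
  and coll: "\<And>t0. x t0 = 0 \<Longrightarrow> y t0 = 0 \<Longrightarrow> \<exists>\<delta>>0. \<forall>s. 0 < \<bar>s\<bar> \<and> \<bar>s\<bar> < \<delta> \<longrightarrow>
     (x (t0+s) \<noteq> 0 \<or> y (t0+s) \<noteq> 0) \<and> x (t0+s) = x (t0-s) \<and> y (t0+s) = y (t0-s)"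
begin

lemma dE:
  assumes N: "x t \<noteq> 0 \<or> y t \<noteq> 0"
  shows "((\<lambda>t. en (x t) (y t) (vx t) (vy t)) has_real_derivative 0) (at t)"
proof -
  note o = ode[OF N]
  have r: "((\<lambda>t. rad (x t) (y t)) has_real_derivative (x t * vx t + y t * vy t) / rad (x t) (y t)) (at t)"
    using deriv_rad o N by blast
  define R where "R = rad (x t) (y t)"
  have R: "R > 0" "R\<^sup>2 = (x t)\<^sup>2 + (y t)\<^sup>2" using rad_pos[OF N] rad_sq R_def by auto
  have "((\<lambda>t. en (x t) (y t) (vx t) (vy t)) has_real_derivative
     (vx t * (- x t / R ^ 3 + 1) + vy t * (- y t / R ^ 3) + ((x t * vx t + y t * vy t) / R) / R\<^sup>2 - vx t)) (at t)"
    unfolding en_def R_def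
    using o r R(1) unfolding R_def
    apply (auto intro!: derivative_eq_intros)
    by (simp add: field_simps power3_eq_cube power2_eq_square)
  moreover have "(vx t * (- x t / R ^ 3 + 1) + vy t * (- y t / R ^ 3) + ((x t * vx t + y t * vy t) / R) / R\<^sup>2 - vx t) = 0"
    using R(1) by (simp add: field_simps power3_eq_cube power2_eq_square)
  ultimately show ?thesis by simp
qed

lemma dw:
  assumes N: "x t \<noteq> 0 \<or> y t \<noteq> 0"
  shows "((\<lambda>t. wf (x t) (y t)) has_real_derivative gf (x t) (y t) (vx t) (vy t) / rad (x t) (y t)) (at t)"
proof -
  note o = ode[OF N]
  have r: "((\<lambda>t. rad (x t) (y t)) has_real_derivative (x t * vx t + y t * vy t) / rad (x t) (y t)) (at t)"
    using deriv_rad o N by blast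
  have R: "rad (x t) (y t) > 0" using rad_pos[OF N] .
  show ?thesis unfolding wf_def gf_def using o r R
    apply (auto intro!: derivative_eq_intros)
    by (simp add: field_simps)
qed

lemma dg:
  assumes N: "x t \<noteq> 0 \<or> y t \<noteq> 0"
  shows "((\<lambda>t. gf (x t) (y t) (vx t) (vy t)) has_real_derivative Gf (x t) (y t) (vx t) (vy t)) (at t)"
proof -
  note o = ode[OF N]
  have r: "((\<lambda>t. rad (x t) (y t)) has_real_derivative (x t * vx t + y t * vy t) / rad (x t) (y t)) (at t)"
    using deriv_rad o N by blast
  show ?thesis unfolding Gf_def gf_def using o r
    by (auto intro!: derivative_eq_intros)
qed

lemma cont_rad: "continuous_on UNIV (\<lambda>t. rad (x t) (y t))"
  unfolding rad_def using contx conty by (intro continuous_intros) auto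

lemma cont_w: "continuous_on UNIV (\<lambda>t. wf (x t) (y t))"
  unfolding wf_def using cont_rad contx by (intro continuous_intros) auto

lemma cont_eps:
  fixes f :: "real \<Rightarrow> real"
  assumes "continuous_on UNIV f" "e > 0"
  shows "\<exists>d>0. \<forall>s. \<bar>s - t\<bar> < d \<longrightarrow> \<bar>f s - f t\<bar> < e"
proof -
  have "\<forall>x\<in>UNIV. \<forall>e>0. \<exists>d>0. \<forall>x'\<in>UNIV. \<bar>x' - x\<bar> < d \<longrightarrow> \<bar>f x' - f x\<bar> < e"
    using assms(1)[unfolded continuous_on_iff dist_real_def] by simp
  then show ?thesis using assms(2) by blast
qed

lemma rad0: "rad a b > 0 \<Longrightarrow> a \<noteq> 0 \<or> b \<noteq> 0"
  unfolding rad_def by auto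

lemma N_nbhd:
  assumes N: "x t \<noteq> 0 \<or> y t \<noteq> 0"
  shows "\<exists>d>0. \<forall>s. \<bar>s - t\<bar> < d \<longrightarrow> x s \<noteq> 0 \<or> y s \<noteq> 0"
proof -
  obtain d where d: "d > 0" "\<forall>s. \<bar>s - t\<bar> < d \<longrightarrow> \<bar>rad (x s) (y s) - rad (x t) (y t)\<bar> < rad (x t) (y t)"
    using cont_eps[OF cont_rad rad_pos[OF N]] by blast
  show ?thesis using d by (intro exI[of _ d]) (auto intro!: rad0 simp: rad_def)
qed

lemma E_int:
  assumes "a \<le> b" "\<And>s. a \<le> s \<Longrightarrow> s \<le> b \<Longrightarrow> x s \<noteq> 0 \<or> y s \<noteq> 0"
  shows "en (x b) (y b) (vx b) (vy b) = en (x a) (y a) (vx a) (vy a)"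
proof (cases "a = b")
  case False
  then have ab: "a < b" using assms(1) by simp
  show ?thesis
  proof (rule DERIV_isconst_end[OF ab])
    show "continuous_on {a..b} (\<lambda>t. en (x t) (y t) (vx t) (vy t))"
      using assms(2) dE by (intro continuous_at_imp_continuous_on ballI DERIV_isCont) auto
    show "\<And>t. a < t \<Longrightarrow> t < b \<Longrightarrow> ((\<lambda>t. en (x t) (y t) (vx t) (vy t)) has_real_derivative 0) (at t)"
      using assms(2) dE by auto
  qed
qed simp

lemma coll_E:
  assumes c: "x c = 0" "y c = 0"
  shows "\<exists>\<delta>>0. \<forall>s. 0 < \<bar>s\<bar> \<and> \<bar>s\<bar> < \<delta> \<longrightarrow> (x (c+s) \<noteq> 0 \<or> y (c+s) \<noteq> 0) \<and>
      en (x (c+s)) (y (c+s)) (vx (c+s)) (vy (c+s)) = en (x (c-s)) (y (c-s)) (vx (c-s)) (vy (c-s))"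
proof -
  obtain \<delta> where d: "\<delta> > 0" "\<forall>s. 0 < \<bar>s\<bar> \<and> \<bar>s\<bar> < \<delta> \<longrightarrow>
     (x (c+s) \<noteq> 0 \<or> y (c+s) \<noteq> 0) \<and> x (c+s) = x (c-s) \<and> y (c+s) = y (c-s)"
    using coll[OF c] by blast
  have vs: "vx (c+s) = - vx (c-s) \<and> vy (c+s) = - vy (c-s)" if s: "0 < \<bar>s\<bar>" "\<bar>s\<bar> < \<delta>" for s
  proof -
    have N1: "x (c+s) \<noteq> 0 \<or> y (c+s) \<noteq> 0" using d s by blast
    have "0 < \<bar>-s\<bar> \<and> \<bar>-s\<bar> < \<delta>" using s by simp
    then have "x (c + -s) \<noteq> 0 \<or> y (c + -s) \<noteq> 0" using d(2) by blast
    then have N2: "x (c-s) \<noteq> 0 \<or> y (c-s) \<noteq> 0" by simp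
    have ev: "eventually (\<lambda>h. x (c+h) = x (c-h) \<and> y (c+h) = y (c-h)) (nhds s)"
    proof -
      have "open {h::real. 0 < \<bar>h\<bar> \<and> \<bar>h\<bar> < \<delta>}"
        by (intro open_Collect_conj open_Collect_less continuous_intros)
      then show ?thesis unfolding eventually_nhds using s d by blast
    qed
    have dx1: "((\<lambda>h. x (c+h)) has_real_derivative vx (c+s) * 1) (at s)"
      by (rule DERIV_chain2[where f=x and g="\<lambda>h. c + h" and x=s and Da="vx (c+s)" and Db="1" and s=UNIV]) (use ode[OF N1] in \<open>auto intro!: derivative_eq_intros\<close>)
    have dx2: "((\<lambda>h. x (c-h)) has_real_derivative vx (c-s) * (-1)) (at s)"
      by (rule DERIV_chain2[where f=x and g="\<lambda>h. c - h" and x=s and Da="vx (c-s)" and Db="(-1)" and s=UNIV]) (use ode[OF N2] in \<open>auto intro!: derivative_eq_intros\<close>)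
    have dy1: "((\<lambda>h. y (c+h)) has_real_derivative vy (c+s) * 1) (at s)"
      by (rule DERIV_chain2[where f=y and g="\<lambda>h. c + h" and x=s and Da="vy (c+s)" and Db="1" and s=UNIV]) (use ode[OF N1] in \<open>auto intro!: derivative_eq_intros\<close>)
    have dy2: "((\<lambda>h. y (c-h)) has_real_derivative vy (c-s) * (-1)) (at s)"
      by (rule DERIV_chain2[where f=y and g="\<lambda>h. c - h" and x=s and Da="vy (c-s)" and Db="(-1)" and s=UNIV]) (use ode[OF N2] in \<open>auto intro!: derivative_eq_intros\<close>)
    have ex: "eventually (\<lambda>h. x (c+h) = x (c-h)) (nhds s)" using ev by (rule eventually_mono) auto
    have ey: "eventually (\<lambda>h. y (c+h) = y (c-h)) (nhds s)" using ev by (rule eventually_mono) auto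
    have "((\<lambda>h. x (c-h)) has_real_derivative vx (c+s) * 1) (at s)"
      using DERIV_cong_ev[OF refl ex refl] dx1 by blast
    with dx2 have 1: "vx (c+s) = - vx (c-s)" using DERIV_unique by fastforce
    have "((\<lambda>h. y (c-h)) has_real_derivative vy (c+s) * 1) (at s)"
      using DERIV_cong_ev[OF refl ey refl] dy1 by blast
    with dy2 have 2: "vy (c+s) = - vy (c-s)" using DERIV_unique by fastforce
    show ?thesis using 1 2 by simp
  qed
  show ?thesis
    using d vs by (intro exI[of _ \<delta>]) (auto simp: en_def)
qed

lemma dense_N:
  assumes "d > 0" shows "\<exists>s. \<bar>s - t\<bar> < d \<and> (x s \<noteq> 0 \<or> y s \<noteq> 0)"
proof (cases "x t \<noteq> 0 \<or> y t \<noteq> 0")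
  case True then show ?thesis using assms by (intro exI[of _ t]) auto
next
  case False
  then obtain \<delta> where d: "\<delta> > 0" "\<forall>s. 0 < \<bar>s\<bar> \<and> \<bar>s\<bar> < \<delta> \<longrightarrow>
     (x (t+s) \<noteq> 0 \<or> y (t+s) \<noteq> 0) \<and> x (t+s) = x (t-s) \<and> y (t+s) = y (t-s)"
    using coll by blast
  define h where "h = min d \<delta> / 2"
  have h: "0 < \<bar>h\<bar>" "\<bar>h\<bar> < \<delta>" "\<bar>h\<bar> < d" using d assms unfolding h_def by auto
  show ?thesis using d(2) h by (intro exI[of _ "t + h"]) auto
qed

lemma loc_const:
  "\<exists>d>0. \<forall>s s'. \<bar>s - t\<bar> < d \<longrightarrow> \<bar>s' - t\<bar> < d \<longrightarrow> (x s \<noteq> 0 \<or> y s \<noteq> 0) \<longrightarrow> (x s' \<noteq> 0 \<or> y s' \<noteq> 0)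
     \<longrightarrow> en (x s) (y s) (vx s) (vy s) = en (x s') (y s') (vx s') (vy s')"
proof (cases "x t \<noteq> 0 \<or> y t \<noteq> 0")
  case True
  obtain d where d: "d > 0" "\<forall>s. \<bar>s - t\<bar> < d \<longrightarrow> x s \<noteq> 0 \<or> y s \<noteq> 0"
    using N_nbhd[OF True] by blast
  have key: "en (x s') (y s') (vx s') (vy s') = en (x s) (y s) (vx s) (vy s)"
    if "\<bar>s - t\<bar> < d" "\<bar>s' - t\<bar> < d" "s \<le> s'" for s s'
    using that d(2) by (intro E_int) auto
  show ?thesis using d(1) key
    by (intro exI[of _ d]) (metis linorder_le_cases)
next
  case False
  then obtain \<delta> where d: "\<delta> > 0" "\<forall>h. 0 < \<bar>h\<bar> \<and> \<bar>h\<bar> < \<delta> \<longrightarrow> (x (t+h) \<noteq> 0 \<or> y (t+h) \<noteq> 0) \<and>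
      en (x (t+h)) (y (t+h)) (vx (t+h)) (vy (t+h)) = en (x (t-h)) (y (t-h)) (vx (t-h)) (vy (t-h))"
    using coll_E by blast
  have right: "en (x (t+h2)) (y (t+h2)) (vx (t+h2)) (vy (t+h2)) = en (x (t+h1)) (y (t+h1)) (vx (t+h1)) (vy (t+h1))"
    if "0 < h1" "h1 \<le> h2" "h2 < \<delta>" for h1 h2
  proof (rule E_int)
    show "t + h1 \<le> t + h2" using that by simp
    fix s assume "t + h1 \<le> s" "s \<le> t + h2"
    then have "0 < \<bar>s - t\<bar> \<and> \<bar>s - t\<bar> < \<delta>" using that by auto
    then have "x (t + (s - t)) \<noteq> 0 \<or> y (t + (s - t)) \<noteq> 0" using d(2) by blast
    then show "x s \<noteq> 0 \<or> y s \<noteq> 0" by simp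
  qed
  have canon: "en (x s) (y s) (vx s) (vy s) = en (x (t + \<bar>s - t\<bar>)) (y (t + \<bar>s - t\<bar>)) (vx (t + \<bar>s - t\<bar>)) (vy (t + \<bar>s - t\<bar>))"
    if "\<bar>s - t\<bar> < \<delta>" "x s \<noteq> 0 \<or> y s \<noteq> 0" for s
  proof (cases "s \<ge> t")
    case True then show ?thesis by simp
  next
    case False
    then have "0 < \<bar>t - s\<bar> \<and> \<bar>t - s\<bar> < \<delta>" using that by auto
    then have "en (x (t+(t-s))) (y (t+(t-s))) (vx (t+(t-s))) (vy (t+(t-s))) = en (x (t-(t-s))) (y (t-(t-s))) (vx (t-(t-s))) (vy (t-(t-s)))"
      using d(2) by blast
    moreover have "\<bar>s - t\<bar> = t - s" using False by simp
    ultimately show ?thesis by simp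
  qed
  have pos: "0 < \<bar>s - t\<bar>" if "x s \<noteq> 0 \<or> y s \<noteq> 0" for s
    using that False by auto
  show ?thesis
  proof (intro exI[of _ \<delta>] conjI allI impI)
    fix s s' assume a: "\<bar>s - t\<bar> < \<delta>" "\<bar>s' - t\<bar> < \<delta>" "x s \<noteq> 0 \<or> y s \<noteq> 0" "x s' \<noteq> 0 \<or> y s' \<noteq> 0"
    have p: "0 < \<bar>s - t\<bar>" "0 < \<bar>s' - t\<bar>" using pos a by auto
    show "en (x s) (y s) (vx s) (vy s) = en (x s') (y s') (vx s') (vy s')"
      unfolding canon[OF a(1,3)] canon[OF a(2,4)]
      using right p a(1,2) by (metis linorder_le_cases)
  qed (use d in auto)
qed

lemma E_global:
  assumes "x t1 \<noteq> 0 \<or> y t1 \<noteq> 0" "x t2 \<noteq> 0 \<or> y t2 \<noteq> 0"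
  shows "en (x t2) (y t2) (vx t2) (vy t2) = en (x t1) (y t1) (vx t1) (vy t1)"
proof -
  define e where "e = en (x t1) (y t1) (vx t1) (vy t1)"
  define U where "U = {t. \<exists>d>0. \<forall>s. \<bar>s - t\<bar> < d \<and> (x s \<noteq> 0 \<or> y s \<noteq> 0) \<longrightarrow> en (x s) (y s) (vx s) (vy s) = e}"
  define V where "V = {t. \<exists>d>0. \<forall>s. \<bar>s - t\<bar> < d \<and> (x s \<noteq> 0 \<or> y s \<noteq> 0) \<longrightarrow> en (x s) (y s) (vx s) (vy s) \<noteq> e}"
  have opn: "open {t. \<exists>d>0. \<forall>s. \<bar>s - t\<bar> < d \<and> P s \<longrightarrow> Q s}" for P Q :: "real \<Rightarrow> bool"
    unfolding open_dist dist_real_def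
  proof (intro ballI)
    fix t assume "t \<in> {t. \<exists>d>0. \<forall>s. \<bar>s - t\<bar> < d \<and> P s \<longrightarrow> Q s}"
    then obtain d where d: "d > 0" "\<forall>s. \<bar>s - t\<bar> < d \<and> P s \<longrightarrow> Q s" by blast
    show "\<exists>e>0. \<forall>y. \<bar>y - t\<bar> < e \<longrightarrow> y \<in> {t. \<exists>d>0. \<forall>s. \<bar>s - t\<bar> < d \<and> P s \<longrightarrow> Q s}"
    proof (intro exI[of _ d] conjI allI impI)
      fix y assume y: "\<bar>y - t\<bar> < d"
      show "y \<in> {t. \<exists>d>0. \<forall>s. \<bar>s - t\<bar> < d \<and> P s \<longrightarrow> Q s}"
        using d y by (intro CollectI exI[of _ "d - \<bar>y - t\<bar>"]) auto
    qed (use d in auto)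
  qed
  have oU: "open U" unfolding U_def by (rule opn)
  have oV: "open V" unfolding V_def by (rule opn)
  have disj: "U \<inter> V \<inter> UNIV = {}"
  proof (rule ccontr)
    assume "U \<inter> V \<inter> UNIV \<noteq> {}"
    then obtain t d1 d2 where "d1 > 0" "d2 > 0"
      "\<forall>s. \<bar>s - t\<bar> < d1 \<and> (x s \<noteq> 0 \<or> y s \<noteq> 0) \<longrightarrow> en (x s) (y s) (vx s) (vy s) = e"
      "\<forall>s. \<bar>s - t\<bar> < d2 \<and> (x s \<noteq> 0 \<or> y s \<noteq> 0) \<longrightarrow> en (x s) (y s) (vx s) (vy s) \<noteq> e"
      unfolding U_def V_def by blast
    moreover obtain s where "\<bar>s - t\<bar> < min d1 d2" "x s \<noteq> 0 \<or> y s \<noteq> 0"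
      using dense_N[of "min d1 d2" t] \<open>d1 > 0\<close> \<open>d2 > 0\<close> by auto
    ultimately show False by auto
  qed
  have cov: "UNIV \<subseteq> U \<union> V"
  proof
    fix t :: real
    obtain d where d: "d > 0" "\<forall>s s'. \<bar>s - t\<bar> < d \<longrightarrow> \<bar>s' - t\<bar> < d \<longrightarrow> (x s \<noteq> 0 \<or> y s \<noteq> 0) \<longrightarrow> (x s' \<noteq> 0 \<or> y s' \<noteq> 0)
     \<longrightarrow> en (x s) (y s) (vx s) (vy s) = en (x s') (y s') (vx s') (vy s')"
      using loc_const by blast
    obtain s0 where s0: "\<bar>s0 - t\<bar> < d" "x s0 \<noteq> 0 \<or> y s0 \<noteq> 0" using dense_N[OF d(1)] by blast
    show "t \<in> U \<union> V"
    proof (cases "en (x s0) (y s0) (vx s0) (vy s0) = e")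
      case True
      then have "t \<in> U" unfolding U_def using d s0 by (intro CollectI exI[of _ d]) metis
      then show ?thesis by simp
    next
      case False
      then have "t \<in> V" unfolding V_def using d s0 by (intro CollectI exI[of _ d]) metis
      then show ?thesis by simp
    qed
  qed
  have "t1 \<in> U"
  proof -
    obtain d where d: "d > 0" "\<forall>s s'. \<bar>s - t1\<bar> < d \<longrightarrow> \<bar>s' - t1\<bar> < d \<longrightarrow> (x s \<noteq> 0 \<or> y s \<noteq> 0) \<longrightarrow> (x s' \<noteq> 0 \<or> y s' \<noteq> 0)
     \<longrightarrow> en (x s) (y s) (vx s) (vy s) = en (x s') (y s') (vx s') (vy s')"
      using loc_const by blast
    show ?thesis unfolding U_def e_def using d assms(1) by (intro CollectI exI[of _ d]) auto
  qed
  then have "V = {}" using connectedD[OF connected_UNIV oU oV disj cov] by auto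
  then have "t2 \<in> U" using cov by auto
  then show ?thesis unfolding U_def e_def using assms(2) by auto
qed

lemma W_le: "wf (x t) (y t) \<le> 2 * rad (x t) (y t)"
  unfolding wf_def using rad_ge(1)[of "x t" "y t"] by linarith

lemma W_pos_N: "wf (x t) (y t) > 0 \<Longrightarrow> x t \<noteq> 0 \<or> y t \<noteq> 0"
  unfolding wf_def rad_def by auto

lemma good_interval:
  assumes Ec: "\<And>t. x t \<noteq> 0 \<or> y t \<noteq> 0 \<Longrightarrow> en (x t) (y t) (vx t) (vy t) = E0"
    and ts: "t0 \<le> s" and W: "\<And>u. t0 \<le> u \<Longrightarrow> u \<le> s \<Longrightarrow> wf (x u) (y u) > max 0 (- E0)"
    and g0: "gf (x t0) (y t0) (vx t0) (vy t0) > 0"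
  shows "gf (x s) (y s) (vx s) (vy s) \<ge> gf (x t0) (y t0) (vx t0) (vy t0) \<and> wf (x s) (y s) \<ge> wf (x t0) (y t0)"
proof -
  have N: "x u \<noteq> 0 \<or> y u \<noteq> 0" if "t0 \<le> u" "u \<le> s" for u
    using W[OF that] W_pos_N by force
  have gmono: "gf (x u) (y u) (vx u) (vy u) \<ge> gf (x t0) (y t0) (vx t0) (vy t0)" if u: "t0 \<le> u" "u \<le> s" for u
  proof (rule DERIV_nonneg_imp_nondecreasing[OF u(1)])
    fix v assume v: "t0 \<le> v" "v \<le> u"
    have Nv: "x v \<noteq> 0 \<or> y v \<noteq> 0" using N v u by auto
    have "Gf (x v) (y v) (vx v) (vy v) > 0"
    proof (rule Gf_pos[OF Nv])
      show "wf (x v) (y v) > 0" using W[of v] v u by auto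
      show "en (x v) (y v) (vx v) (vy v) + wf (x v) (y v) > 0" using W[of v] v u Ec[OF Nv] by auto
    qed
    then show "\<exists>D. ((\<lambda>t. gf (x t) (y t) (vx t) (vy t)) has_real_derivative D) (at v) \<and> D \<ge> 0"
      using dg[OF Nv] by (intro exI[of _ "Gf (x v) (y v) (vx v) (vy v)"]) auto
  qed
  have "wf (x s) (y s) \<ge> wf (x t0) (y t0)"
  proof (rule DERIV_nonneg_imp_nondecreasing[OF ts])
    fix v assume v: "t0 \<le> v" "v \<le> s"
    have Nv: "x v \<noteq> 0 \<or> y v \<noteq> 0" using N v by auto
    have "gf (x v) (y v) (vx v) (vy v) / rad (x v) (y v) \<ge> 0"
      using gmono[OF v] g0 rad_pos[OF Nv] by simp
    then show "\<exists>D. ((\<lambda>t. wf (x t) (y t)) has_real_derivative D) (at v) \<and> D \<ge> 0"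
      using dw[OF Nv] by blast
  qed
  then show ?thesis using gmono[OF ts order_refl] by simp
qed

lemma escape_strict:
  assumes Ec: "\<And>t. x t \<noteq> 0 \<or> y t \<noteq> 0 \<Longrightarrow> en (x t) (y t) (vx t) (vy t) = E0"
    and bnd: "\<And>t. rad (x t) (y t) \<le> M"
    and W0: "wf (x t0) (y t0) > max 0 (- E0)"
    and g0: "gf (x t0) (y t0) (vx t0) (vy t0) > 0"
  shows False
proof -
  define c where "c = max 0 (- E0)"
  define W where "W t = wf (x t) (y t)" for t
  have Wc: "continuous_on UNIV W" unfolding W_def using cont_w by simp
  have claim1: "W t > c" if "t0 \<le> t" for t
  proof (rule ccontr)
    assume "\<not> W t > c"
    define S where "S = {u. t0 \<le> u \<and> u \<le> t \<and> W u \<le> c}"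
    have Sne: "S \<noteq> {}" using that \<open>\<not> W t > c\<close> unfolding S_def by auto
    have Sb: "bdd_below S" unfolding S_def bdd_below_def by auto
    have Scl: "closed S" unfolding S_def
      using Wc by (intro closed_Collect_conj closed_Collect_le continuous_intros) auto
    define ts where "ts = Inf S"
    have tsS: "ts \<in> S" unfolding ts_def using closed_contains_Inf[OF Sne Sb Scl] .
    have below: "W u > c" if "t0 \<le> u" "u < ts" for u
    proof (rule ccontr)
      assume "\<not> W u > c"
      then have "u \<in> S" using that tsS unfolding S_def by auto
      then have "ts \<le> u" unfolding ts_def using Sb by (rule cInf_lower)
      then show False using that by simp
    qed
    have Wts: "W ts \<le> c" "t0 \<le> ts" using tsS unfolding S_def by auto
    have "ts \<noteq> t0" using Wts W0 unfolding W_def c_def by auto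
    then have tgt: "t0 < ts" using Wts by simp
    have mono: "W u \<ge> W t0" if "t0 \<le> u" "u < ts" for u
      using good_interval[OF Ec that(1) _ g0] below that unfolding W_def c_def by auto
    obtain d where d: "d > 0" "\<forall>s. \<bar>s - ts\<bar> < d \<longrightarrow> \<bar>W s - W ts\<bar> < W t0 - c"
      using cont_eps[OF Wc, of "W t0 - c" ts] W0 unfolding W_def c_def by auto
    define u where "u = max t0 (ts - d / 2)"
    have u: "t0 \<le> u" "u < ts" "\<bar>u - ts\<bar> < d" using tgt d(1) unfolding u_def by auto
    have "W u \<ge> W t0" using mono u by auto
    moreover have "\<bar>W u - W ts\<bar> < W t0 - c" using d(2) u by auto
    ultimately show False using Wts by linarith
  qed
  have Mpos: "M > 0"
  proof -
    have "x t0 \<noteq> 0 \<or> y t0 \<noteq> 0" using W0 W_pos_N by force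
    then show ?thesis using rad_pos bnd[of t0] by (meson less_le_trans)
  qed
  define k where "k = gf (x t0) (y t0) (vx t0) (vy t0)"
  have lin: "W t \<ge> W t0 + (t - t0) * (k / M)" if "t0 \<le> t" for t
  proof -
    have "W t0 - (t0 - t0) * (k / M) \<le> W t - (t - t0) * (k / M)"
    proof (rule DERIV_nonneg_imp_nondecreasing[OF that])
      fix v assume v: "t0 \<le> v" "v \<le> t"
      have Wv: "W v > c" using claim1 v by auto
      then have Nv: "x v \<noteq> 0 \<or> y v \<noteq> 0" unfolding W_def c_def using W_pos_N by force
      have gi: "gf (x v) (y v) (vx v) (vy v) \<ge> k"
        using good_interval[OF Ec v(1) _ g0] claim1 unfolding k_def W_def c_def by auto
      have R: "rad (x v) (y v) > 0" "rad (x v) (y v) \<le> M" using rad_pos[OF Nv] bnd by auto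
      have k0: "k > 0" using g0 k_def by simp
      have "k / M \<le> k / rad (x v) (y v)" using R k0 by (intro divide_left_mono) auto
      also have "\<dots> \<le> gf (x v) (y v) (vx v) (vy v) / rad (x v) (y v)" using R gi by (intro divide_right_mono) auto
      finally have le: "gf (x v) (y v) (vx v) (vy v) / rad (x v) (y v) - k / M \<ge> 0" by simp
      have "((\<lambda>t. W t - (t - t0) * (k / M)) has_real_derivative gf (x v) (y v) (vx v) (vy v) / rad (x v) (y v) - 1 * (k / M)) (at v)"
        unfolding W_def by (rule DERIV_diff[OF dw[OF Nv]]) (use Mpos in \<open>auto intro!: derivative_eq_intros\<close>)
      then show "\<exists>D. ((\<lambda>t. W t - (t - t0) * (k / M)) has_real_derivative D) (at v) \<and> D \<ge> 0"
        using le by auto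
    qed
    then show ?thesis by simp
  qed
  have k0: "k > 0" using g0 k_def by simp
  define t where "t = t0 + (2 * M + 1) * M / k"
  have "t0 \<le> t" unfolding t_def using Mpos k0 by simp
  then have "W t \<ge> W t0 + (t - t0) * (k / M)" by (rule lin)
  moreover have "(t - t0) * (k / M) = 2 * M + 1" unfolding t_def using Mpos k0 by (simp add: field_simps)
  moreover have "W t0 > 0" using W0 unfolding W_def by simp
  moreover have "W t \<le> 2 * M" using W_le[of t] bnd[of t] unfolding W_def by simp
  ultimately show False by linarith
qed

lemma escape_weak:
  assumes Ec: "\<And>t. x t \<noteq> 0 \<or> y t \<noteq> 0 \<Longrightarrow> en (x t) (y t) (vx t) (vy t) = E0"
    and bnd: "\<And>t. rad (x t) (y t) \<le> M"
    and W0: "wf (x t0) (y t0) > max 0 (- E0)"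
    and g0: "gf (x t0) (y t0) (vx t0) (vy t0) \<ge> 0"
  shows False
proof (cases "gf (x t0) (y t0) (vx t0) (vy t0) > 0")
  case True then show ?thesis using escape_strict[OF Ec bnd W0] by blast
next
  case False
  have N0: "x t0 \<noteq> 0 \<or> y t0 \<noteq> 0" using W0 W_pos_N by force
  have "Gf (x t0) (y t0) (vx t0) (vy t0) > 0"
    using Gf_pos[OF N0] W0 Ec[OF N0] by auto
  then obtain d where d: "d > 0" "\<forall>h>0. h < d \<longrightarrow> gf (x t0) (y t0) (vx t0) (vy t0) < gf (x (t0+h)) (y (t0+h)) (vx (t0+h)) (vy (t0+h))"
    using DERIV_pos_inc_right[OF dg[OF N0]] by blast
  obtain d2 where d2: "d2 > 0" "\<forall>s. \<bar>s - t0\<bar> < d2 \<longrightarrow> \<bar>wf (x s) (y s) - wf (x t0) (y t0)\<bar> < wf (x t0) (y t0) - max 0 (- E0)"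
    using cont_eps[OF cont_w, of "wf (x t0) (y t0) - max 0 (- E0)" t0] W0 by auto
  define h where "h = min d d2 / 2"
  have h: "h > 0" "h < d" "\<bar>(t0 + h) - t0\<bar> < d2" using d d2 unfolding h_def by auto
  have "gf (x (t0+h)) (y (t0+h)) (vx (t0+h)) (vy (t0+h)) > 0" using d(2) h g0 by force
  moreover have "wf (x (t0+h)) (y (t0+h)) > max 0 (- E0)" using d2(2)[rule_format, OF h(3)] by linarith
  ultimately show False using escape_strict[OF Ec bnd] by blast
qed

lemma rev: "stark (\<lambda>t. x (-t)) (\<lambda>t. y (-t)) (\<lambda>t. - vx (-t)) (\<lambda>t. - vy (-t))"
proof
  show "continuous_on UNIV (\<lambda>t. x (- t))"
    by (rule continuous_on_compose2[OF contx]) (auto intro: continuous_intros)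
  show "continuous_on UNIV (\<lambda>t. y (- t))"
    by (rule continuous_on_compose2[OF conty]) (auto intro: continuous_intros)
next
  fix t assume N: "x (- t) \<noteq> 0 \<or> y (- t) \<noteq> 0"
  note o = ode[OF N]
  have "((\<lambda>t. x (-t)) has_real_derivative vx (-t) * (-1)) (at t)"
    by (rule DERIV_chain2[where f=x and g="\<lambda>h. - h" and x=t and Da="vx (-t)" and Db="-1" and s=UNIV]) (use o in \<open>auto intro!: derivative_eq_intros\<close>)
  moreover have "((\<lambda>t. y (-t)) has_real_derivative vy (-t) * (-1)) (at t)"
    by (rule DERIV_chain2[where f=y and g="\<lambda>h. - h" and x=t and Da="vy (-t)" and Db="-1" and s=UNIV]) (use o in \<open>auto intro!: derivative_eq_intros\<close>)
  moreover have "((\<lambda>t. vx (-t)) has_real_derivative (- x (-t) / rad (x (-t)) (y (-t)) ^ 3 + 1) * (-1)) (at t)"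
    by (rule DERIV_chain2[where f=vx and g="\<lambda>h. - h" and x=t and s=UNIV]) (use o in \<open>auto intro!: derivative_eq_intros\<close>)
  moreover have "((\<lambda>t. vy (-t)) has_real_derivative (- y (-t) / rad (x (-t)) (y (-t)) ^ 3) * (-1)) (at t)"
    by (rule DERIV_chain2[where f=vy and g="\<lambda>h. - h" and x=t and s=UNIV]) (use o in \<open>auto intro!: derivative_eq_intros\<close>)
  ultimately show "((\<lambda>t. x (- t)) has_real_derivative - vx (- t)) (at t) \<and>
       ((\<lambda>t. y (- t)) has_real_derivative - vy (- t)) (at t) \<and>
       ((\<lambda>t. - vx (- t)) has_real_derivative - x (- t) / rad (x (- t)) (y (- t)) ^ 3 + 1) (at t) \<and>
       ((\<lambda>t. - vy (- t)) has_real_derivative - y (- t) / rad (x (- t)) (y (- t)) ^ 3) (at t)"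
    by (auto dest: DERIV_minus)
next
  fix t0 assume c: "x (- t0) = 0" "y (- t0) = 0"
  obtain \<delta> where d: "\<delta> > 0" "\<forall>s. 0 < \<bar>s\<bar> \<and> \<bar>s\<bar> < \<delta> \<longrightarrow>
     (x (-t0+s) \<noteq> 0 \<or> y (-t0+s) \<noteq> 0) \<and> x (-t0+s) = x (-t0-s) \<and> y (-t0+s) = y (-t0-s)"
    using coll[OF c] by blast
  show "\<exists>\<delta>>0. \<forall>s. 0 < \<bar>s\<bar> \<and> \<bar>s\<bar> < \<delta> \<longrightarrow>
      (x (- (t0 + s)) \<noteq> 0 \<or> y (- (t0 + s)) \<noteq> 0) \<and> x (- (t0 + s)) = x (- (t0 - s)) \<and> y (- (t0 + s)) = y (- (t0 - s))"
  proof (intro exI[of _ \<delta>] conjI allI impI)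
    fix s :: real assume s: "0 < \<bar>s\<bar> \<and> \<bar>s\<bar> < \<delta>"
    then have "0 < \<bar>-s\<bar> \<and> \<bar>-s\<bar> < \<delta>" by simp
    then have "(x (-t0 + -s) \<noteq> 0 \<or> y (-t0 + -s) \<noteq> 0) \<and> x (-t0 + -s) = x (-t0 - -s) \<and> y (-t0 + -s) = y (-t0 - -s)"
      using d(2) by blast
    moreover have e1: "-(t0+s) = -t0 + -s" and e2: "-(t0 - s) = -t0 - -s" by simp_all
    ultimately show "x (- (t0 + s)) \<noteq> 0 \<or> y (- (t0 + s)) \<noteq> 0" "x (- (t0 + s)) = x (- (t0 - s))" "y (- (t0 + s)) = y (- (t0 - s))"
      unfolding e1 e2 by blast+
  qed (use d in auto)
qed

lemma escape:
  assumes Ec: "\<And>t. x t \<noteq> 0 \<or> y t \<noteq> 0 \<Longrightarrow> en (x t) (y t) (vx t) (vy t) = E0"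
    and bnd: "\<And>t. rad (x t) (y t) \<le> M"
    and W0: "wf (x t0) (y t0) > max 0 (- E0)"
  shows False
proof (cases "gf (x t0) (y t0) (vx t0) (vy t0) \<ge> 0")
  case True then show ?thesis using escape_weak[OF Ec bnd W0] by blast
next
  case False
  interpret r: stark "\<lambda>t. x (-t)" "\<lambda>t. y (-t)" "\<lambda>t. - vx (-t)" "\<lambda>t. - vy (-t)" by (rule rev)
  show False
  proof (rule r.escape_weak[of E0 M "- t0"])
    show "en (x (- t)) (y (- t)) (- vx (- t)) (- vy (- t)) = E0" if "x (- t) \<noteq> 0 \<or> y (- t) \<noteq> 0" for t
      using Ec[OF that] by (simp add: en_def)
    show "rad (x (- t)) (y (- t)) \<le> M" for t using bnd by simp
    show "max 0 (- E0) < wf (x (- (- t0))) (y (- (- t0)))" using W0 by simp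
    show "0 \<le> gf (x (- (- t0))) (y (- (- t0))) (- vx (- (- t0))) (- vy (- (- t0)))"
      using False by (simp add: gf_def algebra_simps)
  qed
qed

lemma main:
  assumes bnd: "\<And>t. rad (x t) (y t) \<le> M" and t0: "rad (x t0) (y t0) > 1"
  shows "(\<forall>t. y t = 0 \<and> x t \<le> 0) \<and> (\<exists>t. x t = 0 \<and> y t = 0)"
proof -
  have N0: "x t0 \<noteq> 0 \<or> y t0 \<noteq> 0" using t0 rad0 by force
  define E0 where "E0 = en (x t0) (y t0) (vx t0) (vy t0)"
  have Ec: "en (x t) (y t) (vx t) (vy t) = E0" if "x t \<noteq> 0 \<or> y t \<noteq> 0" for t
    using E_global[OF N0 that] E0_def by simp
  have noesc: "\<not> wf (x t) (y t) > max 0 (- E0)" for t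
    using escape[OF Ec bnd] by blast
  have W0: "wf (x t0) (y t0) > - E0"
  proof (rule ccontr)
    assume "\<not> wf (x t0) (y t0) > - E0"
    then have a: "rad (x t0) (y t0) + x t0 \<le> - E0" unfolding wf_def by simp
    have "E0 \<ge> - 1 / rad (x t0) (y t0) - x t0" unfolding E0_def en_def
      by (simp add: add_nonneg_nonneg)
    with a have "rad (x t0) (y t0) \<le> 1 / rad (x t0) (y t0)" by linarith
    moreover have "1 / rad (x t0) (y t0) < 1" using t0 by simp
    ultimately show False using t0 by linarith
  qed
  have Epos: "E0 > 0" using noesc[of t0] W0 by (cases "E0 \<ge> 0") auto
  have Wnn: "wf (x t) (y t) \<ge> 0" for t unfolding wf_def using rad_ge(1)[of "x t" "y t"] by linarith
  have axis: "y t = 0 \<and> x t \<le> 0" for t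
  proof -
    have "wf (x t) (y t) \<le> 0" using noesc[of t] Epos by simp
    then have "wf (x t) (y t) = 0" using Wnn[of t] by simp
    then have e: "sqrt ((x t)\<^sup>2 + (y t)\<^sup>2) = - x t" unfolding wf_def rad_def by simp
    then have "x t \<le> 0" by (metis neg_0_le_iff_le real_sqrt_ge_zero zero_le_power2 add_nonneg_nonneg)
    moreover have "(x t)\<^sup>2 + (y t)\<^sup>2 = (x t)\<^sup>2"
    proof -
      have "(sqrt ((x t)\<^sup>2 + (y t)\<^sup>2))\<^sup>2 = (- x t)\<^sup>2" using e by simp
      then show ?thesis by simp
    qed
    ultimately show ?thesis by simp
  qed
  have coll_ex: "\<exists>t. x t = 0 \<and> y t = 0"
  proof (rule ccontr)
    assume "\<not> (\<exists>t. x t = 0 \<and> y t = 0)"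
    then have N: "x t \<noteq> 0 \<or> y t \<noteq> 0" for t by blast
    have xneg: "x t < 0" for t using N[of t] axis[of t] by auto
    have acc: "- x t / rad (x t) (y t) ^ 3 + 1 \<ge> 1" for t
    proof -
      have "x t / rad (x t) (y t) ^ 3 \<le> 0"
        using xneg[of t] rad_pos[OF N[of t]] by (intro divide_nonpos_pos) auto
      then show ?thesis by simp
    qed
    have vinc: "vx t - t \<ge> vx 0 - 0" if "0 \<le> t" for t
    proof (rule DERIV_nonneg_imp_nondecreasing[OF that])
      fix u
      have "((\<lambda>t. vx t - t) has_real_derivative (- x u / rad (x u) (y u) ^ 3 + 1) - 1) (at u)"
        using ode[OF N[of u]] by (auto intro!: derivative_eq_intros)
      then show "\<exists>D. ((\<lambda>t. vx t - t) has_real_derivative D) (at u) \<and> D \<ge> 0"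
        using acc[of u] by force
    qed
    define T where "T = \<bar>vx 0\<bar> + 1"
    have vT: "vx t \<ge> 1" if "T \<le> t" for t
    proof -
      have "0 \<le> t" using that unfolding T_def by simp
      then have "vx 0 \<le> vx t - t" using vinc by simp
      then show ?thesis using that unfolding T_def by linarith
    qed
    have xinc: "x t - t \<ge> x T - T" if "T \<le> t" for t
    proof (rule DERIV_nonneg_imp_nondecreasing[OF that])
      fix u assume u: "T \<le> u" "u \<le> t"
      have "((\<lambda>t. x t - t) has_real_derivative vx u - 1) (at u)"
        using ode[OF N[of u]] by (auto intro!: derivative_eq_intros)
      then show "\<exists>D. ((\<lambda>t. x t - t) has_real_derivative D) (at u) \<and> D \<ge> 0"
        using vT[of u] u by force
    qed
    define t where "t = T - x T + 1"
    have "T \<le> t" unfolding t_def using xneg[of T] by simp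
    then have "x t \<ge> x T - T + t" using xinc by force
    then have "x t \<ge> 1" unfolding t_def by simp
    then show False using xneg[of t] by simp
  qed
  show ?thesis using axis coll_ex by blast
qed

end

lemma vd_fst: "(q has_vector_derivative v) (at t) \<Longrightarrow> ((\<lambda>t. fst (q t)) has_real_derivative fst v) (at t)"
  unfolding has_vector_derivative_def has_field_derivative_def
proof -
  assume "(q has_derivative (\<lambda>h. h *\<^sub>R v)) (at t)"
  from has_derivative_fst[OF this] have "((\<lambda>t. fst (q t)) has_derivative (\<lambda>h. h * fst v)) (at t)" by simp
  moreover have "(\<lambda>h. h * fst v) = (*) (fst v)" by (rule ext) simp
  ultimately show "((\<lambda>t. fst (q t)) has_derivative (*) (fst v)) (at t)" by simp
qed

lemma vd_snd: "(q has_vector_derivative v) (at t) \<Longrightarrow> ((\<lambda>t. snd (q t)) has_real_derivative snd v) (at t)"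
  unfolding has_vector_derivative_def has_field_derivative_def
proof -
  assume "(q has_derivative (\<lambda>h. h *\<^sub>R v)) (at t)"
  from has_derivative_snd[OF this] have "((\<lambda>t. snd (q t)) has_derivative (\<lambda>h. h * snd v)) (at t)" by simp
  moreover have "(\<lambda>h. h * snd v) = (*) (snd v)" by (rule ext) simp
  ultimately show "((\<lambda>t. snd (q t)) has_derivative (*) (snd v)) (at t)" by simp
qed

theorem corollary1p2:
  fixes q :: "real \<Rightarrow> real \<times> real"
  assumes "stark_solution q"
    and "bounded (range q)"
  shows "collision_ejection_neg_x q \<or> (\<forall>t. norm (q t) \<le> 1)"
proof -
  obtain v where cq: "continuous_on UNIV q"
    and ode: "\<forall>t. q t \<noteq> 0 \<longrightarrow> (q has_vector_derivative v t) (at t) \<and> (v has_vector_derivative stark_field (q t)) (at t)"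
    and cl: "\<forall>t0. q t0 = 0 \<longrightarrow> (\<exists>\<delta>>0. \<forall>s. 0 < \<bar>s\<bar> \<and> \<bar>s\<bar> < \<delta> \<longrightarrow> q (t0 + s) \<noteq> 0 \<and> q (t0 + s) = q (t0 - s))"
    using assms(1) unfolding stark_solution_def by blast
  have nq: "norm (q t) = rad (fst (q t)) (snd (q t))" for t
    by (cases "q t") (simp add: norm_Pair rad_def)
  have q0: "q t = 0 \<longleftrightarrow> fst (q t) = 0 \<and> snd (q t) = 0" for t
    by (simp add: prod_eq_iff)
  interpret st: stark "\<lambda>t. fst (q t)" "\<lambda>t. snd (q t)" "\<lambda>t. fst (v t)" "\<lambda>t. snd (v t)"
  proof
    show "continuous_on UNIV (\<lambda>t. fst (q t))" using cq by (rule continuous_on_fst)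
    show "continuous_on UNIV (\<lambda>t. snd (q t))" using cq by (rule continuous_on_snd)
  next
    fix t assume N: "fst (q t) \<noteq> 0 \<or> snd (q t) \<noteq> 0"
    then have "q t \<noteq> 0" using q0 by blast
    then have o: "(q has_vector_derivative v t) (at t)" "(v has_vector_derivative stark_field (q t)) (at t)"
      using ode by auto
    have sf: "stark_field (q t) = (- fst (q t) / rad (fst (q t)) (snd (q t)) ^ 3 + 1, - snd (q t) / rad (fst (q t)) (snd (q t)) ^ 3)"
      unfolding stark_field_def rad_def Let_def by simp
    show "((\<lambda>t. fst (q t)) has_real_derivative fst (v t)) (at t) \<and>
          ((\<lambda>t. snd (q t)) has_real_derivative snd (v t)) (at t) \<and>
          ((\<lambda>t. fst (v t)) has_real_derivative - fst (q t) / rad (fst (q t)) (snd (q t)) ^ 3 + 1) (at t) \<and>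
          ((\<lambda>t. snd (v t)) has_real_derivative - snd (q t) / rad (fst (q t)) (snd (q t)) ^ 3) (at t)"
      using vd_fst[OF o(1)] vd_snd[OF o(1)] vd_fst[OF o(2)] vd_snd[OF o(2)] unfolding sf by simp
  next
    fix t0 assume "fst (q t0) = 0" "snd (q t0) = 0"
    then have "q t0 = 0" using q0 by blast
    then obtain \<delta> where "\<delta> > 0" "\<forall>s. 0 < \<bar>s\<bar> \<and> \<bar>s\<bar> < \<delta> \<longrightarrow> q (t0 + s) \<noteq> 0 \<and> q (t0 + s) = q (t0 - s)"
      using cl by blast
    then show "\<exists>\<delta>>0. \<forall>s. 0 < \<bar>s\<bar> \<and> \<bar>s\<bar> < \<delta> \<longrightarrow> (fst (q (t0 + s)) \<noteq> 0 \<or> snd (q (t0 + s)) \<noteq> 0) \<and>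
        fst (q (t0 + s)) = fst (q (t0 - s)) \<and> snd (q (t0 + s)) = snd (q (t0 - s))"
      using q0 by metis
  qed
  obtain M where M: "\<And>t. norm (q t) \<le> M"
    using assms(2) unfolding bounded_iff by blast
  show ?thesis
  proof (cases "\<forall>t. norm (q t) \<le> 1")
    case False
    then obtain t0 where "norm (q t0) > 1" by (auto simp: not_le)
    then have "(\<forall>t. snd (q t) = 0 \<and> fst (q t) \<le> 0) \<and> (\<exists>t. fst (q t) = 0 \<and> snd (q t) = 0)"
      using st.main[of M t0] M unfolding nq by blast
    then have "collision_ejection_neg_x q" unfolding collision_ejection_neg_x_def using q0 by blast
    then show ?thesis by blast
  qed simp
qed

end
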